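(* Let $\mathbf{X},\mathbf{Y}$ be sgrms over $\mathbb{R}^d$ on $[0,T]$. A map $\mathbf{Z}:[0,T]^2\to G(\mathbb{R}^d)$ coincides with $\mathbf{X}\boxplus\mathbf{Y}$ if and only if $\mathbf{Z}_{s,t}=\mathbf{Z}_{s,u}\otimes\mathbf{Z}_{u,t}$ for all $s,u,t\in[0,T]$ and, for every $s\in[0,T]$, $$\mathbf{Z}_{s,t}=\mathbf{X}_{s,t}\otimes\mathbf{Y}_{s,t}+R_{s,t}$$ for some $R_{s,t}\in T((\mathbb{R}^d))$ with $\langle R_{s,t},x\rangle=o(|t-s|)$ as $t\to s$ for all $x\in T(\mathbb{R}^d)$. Moreover, $$\mathbf{X}_{s,t}\otimes\mathbf{Y}_{s,t}=\mathbf{Y}_{s,t}\otimes\mathbf{X}_{s,t}+r_{s,t}=\mathbf{X}_{s,t}+\mathbf{Y}_{s,t}-\mathbf{1}+r'_{s,t}$$ for some $r_{s,t},r'_{s,t}\in T((\mathbb{R}^d))$ with $\langle r_{s,t},x\rangle,\langle r'_{s,t},x\rangle=o(|t-s|)$ as $t\to s$ for all $x\in T(\mathbb{R}^d)$.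
   Context: Fix $T>0$, $d\ge1$. $T((\mathbb{R}^d))$: formal tensor series $\sum_w\mathbf{x}^we_w$ over words in $\{1,\dots,d\}$ (incl. empty word, whose basis element $\mathbf{1}$ is the unit) with concatenation product $\otimes$; $T(\mathbb{R}^d)$ the polynomials; $\langle\mathbf{x},w\rangle=\mathbf{x}^w$, extended linearly. Shuffle product: bilinear, unit $\mathbf{1}$, $wi\sqcup\!\sqcup vj=(w\sqcup\!\sqcup vj)i+(wi\sqcup\!\sqcup v)j$. $G(\mathbb{R}^d)=\{\mathbf{x}:\langle\mathbf{x},\mathbf{1}\rangle=1,\ \langle\mathbf{x},v\sqcup\!\sqcup w\rangle=\langle\mathbf{x},v\rangle\langle\mathbf{x},w\rangle\ \forall v,w\}$, a group under $\otimes$; $\mathcal{L}((\mathbb{R}^d))$ the Lie series. An sgrm is a non-zero map $\mathbf{X}:[0,T]^2\to T((\mathbb{R}^d))$ with $\langle\mathbf{X}_{s,t},v\sqcup\!\sqcup w\rangle=\langle\mathbf{X}_{s,t},v\rangle\langle\mathbf{X}_{s,t},w\rangle$ for all words, $\mathbf{X}_{s,u}\otimes\mathbf{X}_{u,t}=\mathbf{X}_{s,t}$, and $t\mapsto\langle\mathbf{X}_{s,t},w\rangle$ smooth for all words $w$ and all $s$. Diagonal derivative $\dot{\mathbf{X}}_{s,s}=\partial_t|_{t=s}\mathbf{X}_{s,t}$ (a smooth $\mathcal{L}((\mathbb{R}^d))$-valued path). The canonical sum $\mathbf{X}\boxplus\mathbf{Y}$ of sgrms $\mathbf{X},\mathbf{Y}$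 is the sgrm $(s,t)\mapsto\mathbf{Z}_s^{-1}\otimes\mathbf{Z}_t$, where $\mathbf{Z}$ is the unique solution in $T((\mathbb{R}^d))$ (solved coordinatewise) of $\dot{\mathbf{Z}}_t=\mathbf{Z}_t\otimes(\dot{\mathbf{X}}_{t,t}+\dot{\mathbf{Y}}_{t,t})$, $\mathbf{Z}_0=\mathbf{1}$. *)

theory Defs
  imports "HOL-Analysis.Analysis" "HOL-Library.Landau_Symbols"
begin

text \<open>Words over the alphabet 'd (a finite type with CARD('d) = d letters);
tensor series are arbitrary coefficient functions on words.\<close>

type_synonym 'd tensor = "'d list \<Rightarrow> real"

definition wrd :: "'d list \<Rightarrow> 'd tensor" where
  "wrd w = (\<lambda>u. if u = w then 1 else 0)"

definition tone :: "'d tensor" where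
  "tone = wrd []"

definition tmul :: "'d tensor \<Rightarrow> 'd tensor \<Rightarrow> 'd tensor" where
  "tmul x y = (\<lambda>w. \<Sum>i\<le>length w. x (take i w) * y (drop i w))"

definition tadd :: "'d tensor \<Rightarrow> 'd tensor \<Rightarrow> 'd tensor" where
  "tadd x y = (\<lambda>w. x w + y w)"

definition tsub :: "'d tensor \<Rightarrow> 'd tensor \<Rightarrow> 'd tensor" where
  "tsub x y = (\<lambda>w. x w - y w)"

definition tpoly :: "'d tensor \<Rightarrow> bool" where
  "tpoly p \<longleftrightarrow> finite {w. p w \<noteq> 0}"

definition pair :: "'d tensor \<Rightarrow> 'd tensor \<Rightarrow> real" where
  "pair x p = (\<Sum>w\<in>{w. p w \<noteq> 0}. x w * p w)"

text \<open>Shuffle product of words, via the recursion on last letters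
  wi sh vj = (w sh vj)i + (wi sh v)j.  shuffle_rev works on reversed words.\<close>
fun shuffle_rev :: "'d list \<Rightarrow> 'd list \<Rightarrow> 'd tensor" where
  "shuffle_rev [] v = wrd v"
| "shuffle_rev (i#w) [] = wrd (i#w)"
| "shuffle_rev (i#w) (j#v) = (\<lambda>u. case u of [] \<Rightarrow> 0
      | k#u' \<Rightarrow> (if k = i then shuffle_rev w (j#v) u' else 0)
              + (if k = j then shuffle_rev (i#w) v u' else 0))"

definition shuffle :: "'d list \<Rightarrow> 'd list \<Rightarrow> 'd tensor" where
  "shuffle w v = (\<lambda>u. shuffle_rev (rev w) (rev v) (rev u))"

definition grouplike :: "'d tensor \<Rightarrow> bool" where
  "grouplike x \<longleftrightarrow> pair x tone = 1 \<and>
     (\<forall>v w. pair x (shuffle v w) = pair x (wrd v) * pair x (wrd w))"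

definition smooth_on_int :: "real \<Rightarrow> (real \<Rightarrow> real) \<Rightarrow> bool" where
  "smooth_on_int T f \<longleftrightarrow> (\<exists>g :: nat \<Rightarrow> real \<Rightarrow> real. g 0 = f \<and>
     (\<forall>n. \<forall>t\<in>{0..T}. (g n has_real_derivative g (Suc n) t) (at t within {0..T})))"

definition sgrm :: "real \<Rightarrow> (real \<Rightarrow> real \<Rightarrow> 'd tensor) \<Rightarrow> bool" where
  "sgrm T X \<longleftrightarrow>
     (\<exists>s\<in>{0..T}. \<exists>t\<in>{0..T}. X s t \<noteq> (\<lambda>_. 0)) \<and>
     (\<forall>s\<in>{0..T}. \<forall>t\<in>{0..T}. \<forall>v w.
        pair (X s t) (shuffle v w) = pair (X s t) (wrd v) * pair (X s t) (wrd w)) \<and>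
     (\<forall>s\<in>{0..T}. \<forall>u\<in>{0..T}. \<forall>t\<in>{0..T}. tmul (X s u) (X u t) = X s t) \<and>
     (\<forall>s\<in>{0..T}. \<forall>w. smooth_on_int T (\<lambda>t. X s t w))"

definition diagder :: "real \<Rightarrow> (real \<Rightarrow> real \<Rightarrow> 'd tensor) \<Rightarrow> real \<Rightarrow> 'd tensor" where
  "diagder T X s = (\<lambda>w. vector_derivative (\<lambda>t. X s t w) (at s within {0..T}))"

definition tinv :: "'d tensor \<Rightarrow> 'd tensor" where
  "tinv x = (THE y. tmul x y = tone \<and> tmul y x = tone)"

text \<open>(values outside [0,T] normalised to 1 so THE is unique) the path Z solving dZ_t = Z_t (Xdot_tt + Ydot_tt), Z_0 = 1\<close>
definition csum_path :: "real \<Rightarrow> (real \<Rightarrow> real \<Rightarrow> 'd tensor) \<Rightarrow> (real \<Rightarrow> real \<Rightarrow> 'd tensor)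
    \<Rightarrow> real \<Rightarrow> 'd tensor" where
  "csum_path T X Y = (THE Z. Z 0 = tone \<and> (\<forall>r. r \<notin> {0..T} \<longrightarrow> Z r = tone) \<and> (\<forall>t\<in>{0..T}. \<forall>w.
      ((\<lambda>r. Z r w) has_real_derivative
          tmul (Z t) (tadd (diagder T X t) (diagder T Y t)) w) (at t within {0..T})))"

definition csum :: "real \<Rightarrow> (real \<Rightarrow> real \<Rightarrow> 'd tensor) \<Rightarrow> (real \<Rightarrow> real \<Rightarrow> 'd tensor)
    \<Rightarrow> real \<Rightarrow> real \<Rightarrow> 'd tensor" where
  "csum T X Y s t = tmul (tinv (csum_path T X Y s)) (csum_path T X Y t)"

end

theory Submission
  imports Defs
begin

lemma tmul_Nil[simp]: "tmul x y [] = x [] * y []"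
  by (simp add: tmul_def)

lemma tmul_Cons: "tmul x y (a#w) = x [] * y (a#w) + tmul (\<lambda>u. x (a#u)) y w"
  unfolding tmul_def
  by (simp add: sum.atMost_Suc_shift del: sum.atMost_Suc)

lemma tmul_zero_left[simp]: "tmul (\<lambda>_. 0) y = (\<lambda>_. 0)"
  by (simp add: tmul_def)

lemma tmul_add_left: "tmul (\<lambda>u. c * f u + g u) y w = c * tmul f y w + tmul g y w"
  by (simp add: tmul_def algebra_simps sum.distrib sum_distrib_left)

lemma tmul_assoc: "tmul (tmul x y) z = tmul x (tmul y z)"
proof
  fix w show "tmul (tmul x y) z w = tmul x (tmul y z) w"
  proof (induction w arbitrary: x y)
    case Nil then show ?case by simp
  next
    case (Cons a w)
    have sh: "(\<lambda>u. tmul x y (a#u)) = (\<lambda>u. x [] * y (a#u) + tmul (\<lambda>u. x (a#u)) y u)"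
      by (simp add: tmul_Cons)
    have "tmul (tmul x y) z (a#w) = x [] * y [] * z (a#w) + tmul (\<lambda>u. x [] * y (a#u) + tmul (\<lambda>u. x (a#u)) y u) z w"
      by (simp add: tmul_Cons sh)
    also have "\<dots> = x [] * y [] * z (a#w) + x [] * tmul (\<lambda>u. y (a#u)) z w + tmul (tmul (\<lambda>u. x (a#u)) y) z w"
      by (simp add: tmul_add_left)
    also have "\<dots> = tmul x (tmul y z) (a#w)"
      using Cons.IH by (simp add: tmul_Cons algebra_simps)
    finally show ?case .
  qed
qed

lemma tone_simps[simp]: "tone [] = 1" "tone (a#w) = 0"
  by (auto simp: tone_def wrd_def)

lemma tmul_tone_left[simp]: "tmul tone x = x"
proof
  fix w show "tmul tone x w = x w"
    by (cases w) (simp_all add: tmul_Cons)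
qed

lemma tmul_tone_right[simp]: "tmul x tone = x"
proof
  fix w show "tmul x tone w = x w"
    by (induction w arbitrary: x) (simp_all add: tmul_Cons)
qed

function linv :: "'d tensor \<Rightarrow> 'd list \<Rightarrow> real" where
  "linv x w = (if w = [] then 1 else - (\<Sum>i<length w. linv x (take i w) * x (drop i w)))"
  by auto
termination
  by (relation "Wellfounded.measure (\<lambda>(x,w). length w)") auto

declare linv.simps[simp del]

lemma linv_left: assumes "x [] = 1" shows "tmul (linv x) x = tone"
proof
  fix w show "tmul (linv x) x w = tone w"
  proof (cases "w = []")
    case True then show ?thesis using assms by (simp add: linv.simps)
  next
    case False
    then obtain a v where w: "w = a # v" by (cases w) auto
    have "tmul (linv x) x w = (\<Sum>i<length w. linv x (take i w) * x (drop i w)) + linv x w * x []"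
      unfolding tmul_def by (simp add: lessThan_Suc_atMost[symmetric])
    also have "\<dots> = 0" using False assms by (subst (2) linv.simps) simp
    finally show ?thesis using w by simp
  qed
qed

lemma inv_unique: assumes "tmul y x = tone" "tmul x z = tone" shows "y = z"
  by (metis assms tmul_assoc tmul_tone_left tmul_tone_right)

lemma inv_exists: assumes "x [] = 1" shows "tmul (linv x) x = tone \<and> tmul x (linv x) = tone"
proof -
  have l: "tmul (linv x) x = tone" using linv_left[of x] assms by simp
  have "linv x [] = 1" by (simp add: linv.simps)
  then have l2: "tmul (linv (linv x)) (linv x) = tone" using linv_left[of "linv x"] by simp
  have "linv (linv x) = x" using inv_unique[OF l2 l] .
  with l2 show ?thesis using l by simp
qed

lemma tinv_eq: assumes "tmul x y = tone" "tmul y x = tone" shows "tinv x = y"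
  unfolding tinv_def
  by (rule the_equality) (use assms inv_unique in auto)

lemma tinv_linv: assumes "x [] = 1" shows "tinv x = linv x"
  using inv_exists[of x] assms by (intro tinv_eq) auto

lemma tinv_props: assumes "x [] = 1" shows "tmul (tinv x) x = tone" "tmul x (tinv x) = tone"
  using inv_exists[of x] tinv_linv[of x] assms by auto

lemma idem_tone: assumes "x [] = 1" "tmul x x = x" shows "x = tone"
  by (metis assms tinv_props(1) tmul_assoc tmul_tone_left)

lemma pair_wrd[simp]: "pair x (wrd w) = x w"
proof -
  have "{u. wrd w u \<noteq> 0} = {w}" by (auto simp: wrd_def)
  then show ?thesis by (simp add: pair_def wrd_def)
qed

lemma grouplike_Nil: "grouplike x \<Longrightarrow> x [] = 1"
  by (simp add: grouplike_def tone_def)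

lemma shuffle_nil: "shuffle v [] = wrd v"
proof
  fix u show "shuffle v [] u = wrd v u"
    by (cases "rev v") (auto simp: shuffle_def wrd_def)
qed


lemma tmul_split_last: "tmul x y w = (\<Sum>i<length w. x (take i w) * y (drop i w)) + x w * y []"
  unfolding tmul_def by (simp add: lessThan_Suc_atMost[symmetric])

lemma sgrm_Nil:
  assumes "sgrm T X" "s \<in> {0..T}" "t \<in> {0..T}"
  shows "X s t [] = 1"
proof (rule ccontr)
  assume ne: "X s t [] \<noteq> 1"
  have sh: "\<forall>v w. pair (X s t) (shuffle v w) = pair (X s t) (wrd v) * pair (X s t) (wrd w)"
    using assms unfolding sgrm_def by blast
  have "X s t [] = X s t [] * X s t []"
    using sh[rule_format, of "[]" "[]"] by (simp add: shuffle_nil)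
  with ne have z: "X s t [] = 0" by (metis mult_cancel_right1)
  have X0: "X s t = (\<lambda>_. 0)"
  proof
    fix v show "X s t v = 0" using sh[rule_format, of v "[]"] z by (simp add: shuffle_nil)
  qed
  have ch: "\<forall>s\<in>{0..T}. \<forall>u\<in>{0..T}. \<forall>t\<in>{0..T}. tmul (X s u) (X u t) = X s t"
    using assms unfolding sgrm_def by blast
  have "X a b = (\<lambda>_. 0)" if "a \<in> {0..T}" "b \<in> {0..T}" for a b
  proof -
    have "X a b = tmul (X a s) (X s b)" using ch that assms by auto
    also have "X s b = tmul (X s t) (X t b)" using ch that assms by auto
    finally show ?thesis using X0 by (simp add: tmul_def)
  qed
  moreover have "\<exists>a\<in>{0..T}. \<exists>b\<in>{0..T}. X a b \<noteq> (\<lambda>_. 0)"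
    using assms(1) unfolding sgrm_def by (rule conjunct1)
  ultimately show False by blast
qed

lemma sgrm_chen: "sgrm T X \<Longrightarrow> s \<in> {0..T} \<Longrightarrow> u \<in> {0..T} \<Longrightarrow> t \<in> {0..T} \<Longrightarrow> tmul (X s u) (X u t) = X s t"
  unfolding sgrm_def by blast

lemma sgrm_diag: assumes "sgrm T X" "s \<in> {0..T}" shows "X s s = tone"
  using idem_tone[of "X s s"] sgrm_Nil[OF assms assms(2)] sgrm_chen[OF assms(1,2,2,2)] by simp

lemma sgrm_der:
  assumes "sgrm T X" "T > 0" "s \<in> {0..T}"
  shows "\<forall>t\<in>{0..T}. ((\<lambda>r. X s r w) has_real_derivative vector_derivative (\<lambda>r. X s r w) (at t within {0..T})) (at t within {0..T})"
    and "continuous_on {0..T} (\<lambda>t. vector_derivative (\<lambda>r. X s r w) (at t within {0..T}))"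
proof -
  have "smooth_on_int T (\<lambda>t. X s t w)" using assms unfolding sgrm_def by blast
  then obtain g where g0: "g 0 = (\<lambda>t. X s t w)" and gd: "\<And>n t. t \<in> {0..T} \<Longrightarrow> (g n has_real_derivative g (Suc n) t) (at t within {0..T})"
    unfolding smooth_on_int_def by blast
  have vd: "vector_derivative (\<lambda>r. X s r w) (at t within {0..T}) = g 1 t" if "t \<in> {0..T}" for t
    using gd[of t 0] that g0 assms(2)
    by (intro vector_derivative_within_closed_interval) (auto simp: has_real_derivative_iff_has_vector_derivative)
  show "\<forall>t\<in>{0..T}. ((\<lambda>r. X s r w) has_real_derivative vector_derivative (\<lambda>r. X s r w) (at t within {0..T})) (at t within {0..T})"
    using gd[of _ 0] g0 vd by simp
  have "continuous_on {0..T} (g 1)"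
    using gd[of _ 1] DERIV_continuous continuous_on_eq_continuous_within by blast
  then show "continuous_on {0..T} (\<lambda>t. vector_derivative (\<lambda>r. X s r w) (at t within {0..T}))"
    using vd continuous_on_cong by (metis (mono_tags, lifting))
qed

lemma diagder_has:
  assumes "sgrm T X" "T > 0" "s \<in> {0..T}"
  shows "((\<lambda>t. X s t w) has_real_derivative diagder T X s w) (at s within {0..T})"
  using sgrm_der(1)[OF assms, of w] assms(3) unfolding diagder_def by blast

lemma der_unique:
  assumes "T > 0" "s \<in> {0..T}" "(f has_real_derivative D) (at s within {0..T})"
  shows "vector_derivative f (at s within {0..T}) = D"
  using assms by (intro vector_derivative_within_closed_interval) (auto simp: has_real_derivative_iff_has_vector_derivative)

lemma diagder_Nil:
  assumes "sgrm T X" "T > 0" "s \<in> {0..T}"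
  shows "diagder T X s [] = 0"
proof -
  have "((\<lambda>t. X s t []) has_real_derivative 0) (at s within {0..T})"
    by (rule has_field_derivative_transform_within[of "\<lambda>_. 1" 0 _ _ 1])
       (use assms sgrm_Nil[OF assms(1)] in auto)
  then show ?thesis unfolding diagder_def using der_unique assms by blast
qed

lemma tmul_deriv:
  assumes "\<And>u. ((\<lambda>t. P t u) has_real_derivative P' u) (at s within S)"
    and "\<And>u. ((\<lambda>t. Q t u) has_real_derivative Q' u) (at s within S)"
  shows "((\<lambda>t. tmul (P t) (Q t) w) has_real_derivative (tmul P' (Q s) w + tmul (P s) Q' w)) (at s within S)"
proof -
  have "((\<lambda>t. \<Sum>i\<le>length w. P t (take i w) * Q t (drop i w)) has_real_derivative
     (\<Sum>i\<le>length w. P' (take i w) * Q s (drop i w) + P s (take i w) * Q' (drop i w))) (at s within S)"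
  proof (rule DERIV_sum)
    fix i
    show "((\<lambda>t. P t (take i w) * Q t (drop i w)) has_real_derivative
     P' (take i w) * Q s (drop i w) + P s (take i w) * Q' (drop i w)) (at s within S)"
      using DERIV_mult'[OF assms(1) assms(2), of "take i w" "drop i w"] by (simp add: add.commute)
  qed
  then show ?thesis unfolding tmul_def by (simp add: sum.distrib)
qed

lemma dXY:
  assumes "sgrm T X" "sgrm T Y" "T > 0" "s \<in> {0..T}"
  shows "((\<lambda>t. tmul (X s t) (Y s t) w) has_real_derivative (diagder T X s w + diagder T Y s w)) (at s within {0..T})"
  using tmul_deriv[where P="X s" and Q="Y s", OF diagder_has[OF assms(1,3,4)] diagder_has[OF assms(2,3,4)]]
    sgrm_diag[OF assms(1,4)] sgrm_diag[OF assms(2,4)] by simp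

lemma linv_cont:
  assumes "\<And>u. continuous_on S (\<lambda>t. x t u)"
  shows "continuous_on S (\<lambda>t. linv (x t) w)"
proof (induction "length w" arbitrary: w rule: less_induct)
  case less
  show ?case
  proof (cases "w = []")
    case True then show ?thesis by (simp add: linv.simps)
  next
    case False
    have "continuous_on S (\<lambda>t. - (\<Sum>i<length w. linv (x t) (take i w) * x t (drop i w)))"
      by (intro continuous_intros less assms) auto
    then show ?thesis using False by (subst linv.simps) simp
  qed
qed

lemma sgrm_cont:
  assumes "sgrm T X" "T > 0" "s \<in> {0..T}"
  shows "continuous_on {0..T} (\<lambda>t. X s t w)"
  using sgrm_der(1)[OF assms, of w] DERIV_continuous continuous_on_eq_continuous_within by blast

lemma diagder_cont:
  assumes "sgrm T X" "T > 0"
  shows "continuous_on {0..T} (\<lambda>t. diagder T X t w)"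
proof -
  have z: "0 \<in> {0..T}" using assms by simp
  define D0 where "D0 t u = vector_derivative (\<lambda>r. X 0 r u) (at t within {0..T})" for t u
  have eq: "diagder T X t w = tmul (X t 0) (D0 t) w" if t: "t \<in> {0..T}" for t
  proof -
    have "((\<lambda>r. tmul (X t 0) (X 0 r) w) has_real_derivative (tmul (\<lambda>_. 0) (X 0 t) w + tmul (X t 0) (D0 t) w)) (at t within {0..T})"
    proof (rule tmul_deriv)
      fix u
      show "((\<lambda>r. X t 0 u) has_real_derivative 0) (at t within {0..T})" by simp
      show "((\<lambda>r. X 0 r u) has_real_derivative D0 t u) (at t within {0..T})"
        using sgrm_der(1)[OF assms z, of u] t unfolding D0_def by blast
    qed
    then have "((\<lambda>r. tmul (X t 0) (X 0 r) w) has_real_derivative tmul (X t 0) (D0 t) w) (at t within {0..T})"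
      by simp
    then have "((\<lambda>r. X t r w) has_real_derivative tmul (X t 0) (D0 t) w) (at t within {0..T})"
      by (rule has_field_derivative_transform_within[where d=1]) (use t sgrm_chen[OF assms(1) t z] in auto)
    then show ?thesis unfolding diagder_def using der_unique assms t by blast
  qed
  have inv: "X t 0 = linv (X 0 t)" if t: "t \<in> {0..T}" for t
  proof -
    have "tmul (X t 0) (X 0 t) = tone" using sgrm_chen[OF assms(1) t z t] sgrm_diag[OF assms(1) t] by simp
    moreover have "tmul (X 0 t) (linv (X 0 t)) = tone" using inv_exists[of "X 0 t"] sgrm_Nil[OF assms(1) z t] by simp
    ultimately show ?thesis by (rule inv_unique)
  qed
  have c1: "continuous_on {0..T} (\<lambda>t. linv (X 0 t) u)" for u
    by (rule linv_cont) (rule sgrm_cont[OF assms z])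
  have c2: "continuous_on {0..T} (\<lambda>t. D0 t u)" for u
    using sgrm_der(2)[OF assms z, of u] unfolding D0_def .
  have "continuous_on {0..T} (\<lambda>t. \<Sum>i\<le>length w. linv (X 0 t) (take i w) * D0 t (drop i w))"
    by (intro continuous_on_sum continuous_on_mult c1 c2)
  moreover have "diagder T X t w = (\<Sum>i\<le>length w. linv (X 0 t) (take i w) * D0 t (drop i w))"
    if t: "t \<in> {0..T}" for t
    using eq[OF t] inv[OF t] unfolding tmul_def by (simp only:)
  ultimately show ?thesis
    using continuous_on_cong[of "{0..T}" "{0..T}" "\<lambda>t. diagder T X t w"] by (metis (no_types, lifting))
qed

definition AA :: "real \<Rightarrow> (real \<Rightarrow> real \<Rightarrow> 'd tensor) \<Rightarrow> (real \<Rightarrow> real \<Rightarrow> 'd tensor) \<Rightarrow> real \<Rightarrow> 'd tensor" where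
  "AA T X Y t = tadd (diagder T X t) (diagder T Y t)"

definition odesol :: "real \<Rightarrow> (real \<Rightarrow> real \<Rightarrow> 'd tensor) \<Rightarrow> (real \<Rightarrow> real \<Rightarrow> 'd tensor) \<Rightarrow> (real \<Rightarrow> 'd tensor) \<Rightarrow> bool" where
  "odesol T X Y W \<longleftrightarrow> W 0 = tone \<and> (\<forall>r. r \<notin> {0..T} \<longrightarrow> W r = tone) \<and> (\<forall>t\<in>{0..T}. \<forall>w.
      ((\<lambda>r. W r w) has_real_derivative tmul (W t) (AA T X Y t) w) (at t within {0..T}))"

lemma csum_path_odesol: "csum_path T X Y = (THE W. odesol T X Y W)"
  unfolding csum_path_def odesol_def AA_def ..

lemma AA_Nil: "sgrm T X \<Longrightarrow> sgrm T Y \<Longrightarrow> T > 0 \<Longrightarrow> t \<in> {0..T} \<Longrightarrow> AA T X Y t [] = 0"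
  by (simp add: AA_def tadd_def diagder_Nil)

lemma AA_cont: "sgrm T X \<Longrightarrow> sgrm T Y \<Longrightarrow> T > 0 \<Longrightarrow> continuous_on {0..T} (\<lambda>t. AA T X Y t u)"
  unfolding AA_def tadd_def by (intro continuous_on_add diagder_cont)

lemma ode_unique:
  assumes "sgrm T X" "sgrm T Y" "T > 0" "odesol T X Y W1" "odesol T X Y W2"
  shows "W1 = W2"
proof
  fix r show "W1 r = W2 r"
  proof (cases "r \<in> {0..T}")
    case False then show ?thesis using assms(4,5) unfolding odesol_def by simp
  next
    case r: True
    have "\<forall>t\<in>{0..T}. W1 t w = W2 t w" for w
    proof (induction "length w" arbitrary: w rule: less_induct)
      case less
      have d: "((\<lambda>t. W1 t w - W2 t w) has_real_derivative 0) (at t within {0..T})" if t: "t \<in> {0..T}" for t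
      proof -
        have d1: "((\<lambda>t. W1 t w - W2 t w) has_real_derivative tmul (W1 t) (AA T X Y t) w - tmul (W2 t) (AA T X Y t) w) (at t within {0..T})"
          using assms(4,5) t unfolding odesol_def by (intro DERIV_diff) auto
        have "tmul (W1 t) (AA T X Y t) w - tmul (W2 t) (AA T X Y t) w = 0"
          unfolding tmul_split_last using less t AA_Nil[OF assms(1-3) t] by simp
        with d1 show ?thesis by simp
      qed
      obtain c where "\<forall>x\<in>{0..T}. W1 x w - W2 x w = c"
        using has_field_derivative_zero_constant[OF convex_real_interval(5) d] by blast
      moreover have "W1 0 w - W2 0 w = 0" using assms(4,5) unfolding odesol_def by simp
      ultimately show ?case using assms(3) by force
    qed
    then show ?thesis using r by blast
  qed
qed

function wsol :: "(real \<Rightarrow> 'd tensor) \<Rightarrow> 'd list \<Rightarrow> real \<Rightarrow> real" where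
  "wsol a w t = (if w = [] then 1 else integral {0..t} (\<lambda>r. \<Sum>i<length w. wsol a (take i w) r * a r (drop i w)))"
  by auto
termination
  by (relation "Wellfounded.measure (\<lambda>(a,w,t). length w)") auto

declare wsol.simps[simp del]

lemma wsol_props:
  assumes "\<And>u. continuous_on {0..T} (\<lambda>t. a t u)"
  shows "continuous_on {0..T} (wsol a w) \<and> (\<forall>t\<in>{0..T}. (wsol a w has_real_derivative (\<Sum>i<length w. wsol a (take i w) t * a t (drop i w))) (at t within {0..T}))"
proof (induction "length w" arbitrary: w rule: less_induct)
  case less
  show ?case
  proof (cases "w = []")
    case True
    have "wsol a w = (\<lambda>_. 1)" using True by (simp add: wsol.simps fun_eq_iff)
    then show ?thesis using True by simp
  next
    case False
    define f where "f = (\<lambda>r. \<Sum>i<length w. wsol a (take i w) r * a r (drop i w))"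
    have cf: "continuous_on {0..T} f"
      unfolding f_def using less False by (intro continuous_on_sum continuous_on_mult assms) auto
    have eq: "wsol a w = (\<lambda>t. integral {0..t} f)"
      by (rule ext, subst wsol.simps) (simp add: f_def False)
    have der: "(wsol a w has_real_derivative f t) (at t within {0..T})" if "t \<in> {0..T}" for t
      unfolding eq has_real_derivative_iff_has_vector_derivative
      by (rule integral_has_vector_derivative[OF cf that])
    have "continuous_on {0..T} (wsol a w)"
      using der DERIV_continuous continuous_on_eq_continuous_within by blast
    moreover have "\<forall>t\<in>{0..T}. (wsol a w has_real_derivative (\<Sum>i<length w. wsol a (take i w) t * a t (drop i w))) (at t within {0..T})"
      using der by (simp add: f_def)
    ultimately show ?thesis by blast
  qed
qed

lemma wsol_0: "wsol a w 0 = tone w"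
  by (subst wsol.simps) (cases w, auto)

lemma ode_exists:
  assumes "sgrm T X" "sgrm T Y" "T > 0"
  shows "odesol T X Y (\<lambda>t. if t \<in> {0..T} then (\<lambda>w. wsol (AA T X Y) w t) else tone)"
  unfolding odesol_def
proof (intro conjI allI ballI impI)
  show "(if (0::real) \<in> {0..T} then (\<lambda>w. wsol (AA T X Y) w 0) else tone) = tone"
    using assms(3) by (simp add: fun_eq_iff wsol_0)
next
  fix r :: real assume "r \<notin> {0..T}" then show "(if r \<in> {0..T} then (\<lambda>w. wsol (AA T X Y) w r) else tone) = tone" by (simp only: if_not_P if_False)
next
  fix t w assume t: "t \<in> {0..T}"
  have "(wsol (AA T X Y) w has_real_derivative (\<Sum>i<length w. wsol (AA T X Y) (take i w) t * AA T X Y t (drop i w))) (at t within {0..T})"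
    using wsol_props[of T "AA T X Y" w] AA_cont[OF assms] t by blast
  moreover have "(\<Sum>i<length w. wsol (AA T X Y) (take i w) t * AA T X Y t (drop i w)) = tmul (\<lambda>w. wsol (AA T X Y) w t) (AA T X Y t) w"
    unfolding tmul_split_last using AA_Nil[OF assms t] by simp
  ultimately have "(wsol (AA T X Y) w has_real_derivative tmul (\<lambda>w. wsol (AA T X Y) w t) (AA T X Y t) w) (at t within {0..T})"
    by simp
  then show "((\<lambda>r. (if r \<in> {0..T} then (\<lambda>w. wsol (AA T X Y) w r) else tone) w) has_real_derivative
          tmul (if t \<in> {0..T} then (\<lambda>w. wsol (AA T X Y) w t) else tone) (AA T X Y t) w) (at t within {0..T})"
    unfolding if_P[OF t] by (rule has_field_derivative_transform_within[where d=1]) (use t in auto)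
qed

lemma csum_path_eq:
  assumes "sgrm T X" "sgrm T Y" "T > 0" "odesol T X Y W"
  shows "csum_path T X Y = W"
  unfolding csum_path_odesol using assms ode_unique by blast

lemma odesol_Nil:
  assumes "sgrm T X" "sgrm T Y" "T > 0" "odesol T X Y W" "t \<in> {0..T}"
  shows "W t [] = 1"
proof -
  have d: "((\<lambda>t. W t []) has_real_derivative 0) (at t within {0..T})" if t: "t \<in> {0..T}" for t
  proof -
    have "((\<lambda>r. W r []) has_real_derivative tmul (W t) (AA T X Y t) []) (at t within {0..T})"
    proof -
      have "\<forall>t\<in>{0..T}. \<forall>w. ((\<lambda>r. W r w) has_real_derivative tmul (W t) (AA T X Y t) w) (at t within {0..T})"
        using assms(4) unfolding odesol_def by (rule conjunct2[THEN conjunct2])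
      then show ?thesis using t by blast
    qed
    then show ?thesis using AA_Nil[OF assms(1-3) t] by simp
  qed
  obtain c where "\<forall>x\<in>{0..T}. W x [] = c"
    using has_field_derivative_zero_constant[OF convex_real_interval(5) d] by blast
  moreover have "W 0 [] = 1" using assms(4) unfolding odesol_def by simp
  ultimately show ?thesis using assms by force
qed


lemma abs_div_eq: "(\<lambda>y::real. \<bar>(f::real\<Rightarrow>real) y / (y - s)\<bar>) = (\<lambda>y. \<bar>f y / \<bar>y - s\<bar>\<bar>)"
  by (rule ext) (simp only: abs_divide abs_abs)

lemma o_of_deriv:
  assumes "(f has_real_derivative 0) (at s within S)" "f s = 0"
  shows "f \<in> o[at s within S](\<lambda>t. \<bar>t - s\<bar>)"
proof (rule smalloI_tendsto)
  have "((\<lambda>y. (f y - f s) / (y - s)) \<longlongrightarrow> 0) (at s within S)"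
    using assms(1) by (simp only: has_field_derivative_iff)
  then have "((\<lambda>y. f y / (y - s)) \<longlongrightarrow> 0) (at s within S)"
    using assms(2) by simp
  then have "((\<lambda>y. \<bar>f y / (y - s)\<bar>) \<longlongrightarrow> 0) (at s within S)"
    by (rule tendsto_rabs_zero_iff[THEN iffD2])
  then have "((\<lambda>y. \<bar>f y / \<bar>y - s\<bar>\<bar>) \<longlongrightarrow> 0) (at s within S)"
    by (simp only: abs_div_eq)
  then show "((\<lambda>y. f y / \<bar>y - s\<bar>) \<longlongrightarrow> 0) (at s within S)"
    by (rule tendsto_rabs_zero_iff[THEN iffD1])
  show "\<forall>\<^sub>F x in at s within S. \<bar>x - s\<bar> \<noteq> 0"
    by (simp add: eventually_at_filter)
qed

lemma deriv_of_o:
  assumes "f \<in> o[at s within S](\<lambda>t. \<bar>t - s\<bar>)" "f s = 0"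
  shows "(f has_real_derivative 0) (at s within S)"
proof -
  have "((\<lambda>y. f y / \<bar>y - s\<bar>) \<longlongrightarrow> 0) (at s within S)" using smalloD_tendsto[OF assms(1)] .
  then have "((\<lambda>y. \<bar>f y / \<bar>y - s\<bar>\<bar>) \<longlongrightarrow> 0) (at s within S)"
    by (rule tendsto_rabs_zero_iff[THEN iffD2])
  then have "((\<lambda>y. \<bar>f y / (y - s)\<bar>) \<longlongrightarrow> 0) (at s within S)"
    by (simp only: abs_div_eq)
  then have "((\<lambda>y. f y / (y - s)) \<longlongrightarrow> 0) (at s within S)"
    by (rule tendsto_rabs_zero_iff[THEN iffD1])
  then have "((\<lambda>y. (f y - f s) / (y - s)) \<longlongrightarrow> 0) (at s within S)"
    using assms(2) by simp
  then show ?thesis by (simp only: has_field_derivative_iff)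
qed

lemma pair_o:
  assumes "tpoly p" "\<And>w. (\<lambda>t. R t w) \<in> o[F](g)"
  shows "(\<lambda>t. pair (R t) p) \<in> o[F](g)"
  unfolding pair_def
proof (rule big_sum_in_smallo)
  fix w assume "w \<in> {w. p w \<noteq> 0}"
  then show "(\<lambda>t. R t w * p w) \<in> o[F](g)" using assms(2)[of w] by simp
qed

lemma tpoly_wrd: "tpoly (wrd u)"
proof -
  have "{w. wrd u w \<noteq> 0} = {u}" by (auto simp: wrd_def)
  then show ?thesis by (simp add: tpoly_def)
qed

lemma moreover_part:
  assumes "sgrm T X" "sgrm T Y" "T > 0" "s \<in> {0..T}"
  shows "\<exists>r r' :: real \<Rightarrow> 'd tensor.
            (\<forall>t\<in>{0..T}. tmul (X s t) (Y s t) = tadd (tmul (Y s t) (X s t)) (r t) \<and>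
               tmul (X s t) (Y s t) = tadd (tsub (tadd (X s t) (Y s t)) tone) (r' t)) \<and>
            (\<forall>p. tpoly p \<longrightarrow>
               (\<lambda>t. pair (r t) p) \<in> o[at s within {0..T}](\<lambda>t. \<bar>t - s\<bar>) \<and>
               (\<lambda>t. pair (r' t) p) \<in> o[at s within {0..T}](\<lambda>t. \<bar>t - s\<bar>))"
proof (intro exI conjI ballI allI impI)
  fix t
  show "tmul (X s t) (Y s t) = tadd (tmul (Y s t) (X s t)) ((\<lambda>t w. tmul (X s t) (Y s t) w - tmul (Y s t) (X s t) w) t)"
    by (simp add: tadd_def)
  show "tmul (X s t) (Y s t) = tadd (tsub (tadd (X s t) (Y s t)) tone) ((\<lambda>t w. tmul (X s t) (Y s t) w - (X s t w + Y s t w - tone w)) t)"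
    by (simp add: tadd_def tsub_def)
next
  fix p :: "'d tensor" assume p: "tpoly p"
  have XX: "X s s = tone" "Y s s = tone" using sgrm_diag assms by blast+
  have dX: "((\<lambda>t. X s t w) has_real_derivative diagder T X s w) (at s within {0..T})" for w
    using diagder_has assms by blast
  have dY: "((\<lambda>t. Y s t w) has_real_derivative diagder T Y s w) (at s within {0..T})" for w
    using diagder_has assms by blast
  have dXY': "((\<lambda>t. tmul (Y s t) (X s t) w) has_real_derivative (diagder T Y s w + diagder T X s w)) (at s within {0..T})" for w
    using dXY[OF assms(2,1,3,4)] .
  show "(\<lambda>t. pair ((\<lambda>t w. tmul (X s t) (Y s t) w - tmul (Y s t) (X s t) w) t) p) \<in> o[at s within {0..T}](\<lambda>t. \<bar>t - s\<bar>)"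
  proof (rule pair_o[OF p], rule o_of_deriv)
    fix w
    show "((\<lambda>t. tmul (X s t) (Y s t) w - tmul (Y s t) (X s t) w) has_real_derivative 0) (at s within {0..T})"
      using DERIV_diff[OF dXY[OF assms, of w] dXY'[of w]] by simp
    show "tmul (X s s) (Y s s) w - tmul (Y s s) (X s s) w = 0" using XX by simp
  qed
  show "(\<lambda>t. pair ((\<lambda>t w. tmul (X s t) (Y s t) w - (X s t w + Y s t w - tone w)) t) p) \<in> o[at s within {0..T}](\<lambda>t. \<bar>t - s\<bar>)"
  proof (rule pair_o[OF p], rule o_of_deriv)
    fix w
    show "((\<lambda>t. tmul (X s t) (Y s t) w - (X s t w + Y s t w - tone w)) has_real_derivative 0) (at s within {0..T})"
      using DERIV_diff[OF dXY[OF assms, of w] DERIV_diff[OF DERIV_add[OF dX[of w] dY[of w]] DERIV_const[of "tone w"]]] by simp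
    show "tmul (X s s) (Y s s) w - (X s s w + Y s s w - tone w) = 0" using XX by simp
  qed
qed


lemma AA_eq: "AA T X Y t w = diagder T X t w + diagder T Y t w"
  by (simp add: AA_def tadd_def)

lemma odesol_der:
  assumes "odesol T X Y W" "t \<in> {0..T}"
  shows "((\<lambda>r. W r w) has_real_derivative tmul (W t) (AA T X Y t) w) (at t within {0..T})"
proof -
  have "\<forall>t\<in>{0..T}. \<forall>w. ((\<lambda>r. W r w) has_real_derivative tmul (W t) (AA T X Y t) w) (at t within {0..T})"
    using assms(1) unfolding odesol_def by (rule conjunct2[THEN conjunct2])
  then show ?thesis using assms(2) by blast
qed

lemma fwd:
  fixes X Y Z :: "real \<Rightarrow> real \<Rightarrow> 'd tensor"
  assumes "T > 0" "sgrm T X" "sgrm T Y"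
    and H: "\<forall>s\<in>{0..T}. \<forall>t\<in>{0..T}. Z s t = csum T X Y s t"
  shows "(\<forall>s\<in>{0..T}. \<forall>u\<in>{0..T}. \<forall>t\<in>{0..T}. Z s t = tmul (Z s u) (Z u t)) \<and>
           (\<forall>s\<in>{0..T}. \<exists>R :: real \<Rightarrow> 'd tensor.
              (\<forall>t\<in>{0..T}. Z s t = tadd (tmul (X s t) (Y s t)) (R t)) \<and>
              (\<forall>p. tpoly p \<longrightarrow>
                 (\<lambda>t. pair (R t) p) \<in> o[at s within {0..T}](\<lambda>t. \<bar>t - s\<bar>)))"
proof -
  define W where "W = csum_path T X Y"
  have ode: "odesol T X Y W"
    using ode_exists[OF assms(2,3,1)] csum_path_eq[OF assms(2,3,1)] unfolding W_def by metis
  have WN: "W t [] = 1" if "t \<in> {0..T}" for t using odesol_Nil[OF assms(2,3,1) ode that] .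
  have Zeq: "Z s t = tmul (tinv (W s)) (W t)" if "s \<in> {0..T}" "t \<in> {0..T}" for s t
    using H that unfolding csum_def W_def by simp
  have chen: "\<forall>s\<in>{0..T}. \<forall>u\<in>{0..T}. \<forall>t\<in>{0..T}. Z s t = tmul (Z s u) (Z u t)"
  proof (intro ballI)
    fix s u t assume st: "s \<in> {0..T}" "u \<in> {0..T}" "t \<in> {0..T}"
    have "tmul (Z s u) (Z u t) = tmul (tinv (W s)) (tmul (tmul (W u) (tinv (W u))) (W t))"
      using Zeq st by (simp add: tmul_assoc)
    also have "\<dots> = Z s t" using tinv_props(2)[of "W u", OF WN[OF st(2)]] Zeq st by simp
    finally show "Z s t = tmul (Z s u) (Z u t)" by simp
  qed
  have exp: "\<exists>R :: real \<Rightarrow> 'd tensor.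
              (\<forall>t\<in>{0..T}. Z s t = tadd (tmul (X s t) (Y s t)) (R t)) \<and>
              (\<forall>p. tpoly p \<longrightarrow>
                 (\<lambda>t. pair (R t) p) \<in> o[at s within {0..T}](\<lambda>t. \<bar>t - s\<bar>))" if s: "s \<in> {0..T}" for s
  proof (intro exI conjI ballI allI impI)
    fix t assume "t \<in> {0..T}"
    show "Z s t = tadd (tmul (X s t) (Y s t)) ((\<lambda>t w. Z s t w - tmul (X s t) (Y s t) w) t)"
      by (simp add: tadd_def)
  next
    fix p :: "'d tensor" assume p: "tpoly p"
    show "(\<lambda>t. pair ((\<lambda>t w. Z s t w - tmul (X s t) (Y s t) w) t) p) \<in> o[at s within {0..T}](\<lambda>t. \<bar>t - s\<bar>)"
    proof (rule pair_o[OF p], rule o_of_deriv)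
      fix w
      have d1: "((\<lambda>t. tmul (tinv (W s)) (W t) w) has_real_derivative
          (tmul (\<lambda>_. 0) (W s) w + tmul (tinv (W s)) (tmul (W s) (AA T X Y s)) w)) (at s within {0..T})"
      proof (rule tmul_deriv)
        fix u
        show "((\<lambda>t. tinv (W s) u) has_real_derivative 0) (at s within {0..T})" by simp
        show "((\<lambda>t. W t u) has_real_derivative tmul (W s) (AA T X Y s) u) (at s within {0..T})"
          by (rule odesol_der[OF ode s])
      qed
      have "tmul (\<lambda>_. 0) (W s) w + tmul (tinv (W s)) (tmul (W s) (AA T X Y s)) w = AA T X Y s w"
        using tinv_props(1)[of "W s", OF WN[OF s]] by (simp add: tmul_assoc[symmetric])
      with d1 have d2: "((\<lambda>t. tmul (tinv (W s)) (W t) w) has_real_derivative AA T X Y s w) (at s within {0..T})"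
        by simp
      have d3: "((\<lambda>t. Z s t w) has_real_derivative AA T X Y s w) (at s within {0..T})"
        by (rule has_field_derivative_transform_within[where d=1, OF d2]) (use s Zeq in auto)
      show "((\<lambda>t. Z s t w - tmul (X s t) (Y s t) w) has_real_derivative 0) (at s within {0..T})"
        using DERIV_diff[OF d3 dXY[OF assms(2,3,1) s, of w]] by (simp add: AA_eq)
      have "Z s s = tone" using Zeq[OF s s] tinv_props(1)[of "W s", OF WN[OF s]] by simp
      then show "Z s s w - tmul (X s s) (Y s s) w = 0"
        using sgrm_diag[OF assms(2) s] sgrm_diag[OF assms(3) s] by simp
    qed
  qed
  show ?thesis using chen exp by blast
qed


lemma bwd:
  fixes X Y Z :: "real \<Rightarrow> real \<Rightarrow> 'd tensor"
  assumes "T > 0" "sgrm T X" "sgrm T Y"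
    and G: "\<forall>s\<in>{0..T}. \<forall>t\<in>{0..T}. grouplike (Z s t)"
    and C: "\<forall>s\<in>{0..T}. \<forall>u\<in>{0..T}. \<forall>t\<in>{0..T}. Z s t = tmul (Z s u) (Z u t)"
    and E: "\<forall>s\<in>{0..T}. \<exists>R :: real \<Rightarrow> 'd tensor.
              (\<forall>t\<in>{0..T}. Z s t = tadd (tmul (X s t) (Y s t)) (R t)) \<and>
              (\<forall>p. tpoly p \<longrightarrow>
                 (\<lambda>t. pair (R t) p) \<in> o[at s within {0..T}](\<lambda>t. \<bar>t - s\<bar>))"
  shows "\<forall>s\<in>{0..T}. \<forall>t\<in>{0..T}. Z s t = csum T X Y s t"
proof -
  have z: "(0::real) \<in> {0..T}" using assms(1) by simp
  have ZN: "Z s t [] = 1" if "s \<in> {0..T}" "t \<in> {0..T}" for s t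
    using G that grouplike_Nil by blast
  have Zd: "Z t t = tone" if t: "t \<in> {0..T}" for t
  proof -
    have "Z t t = tmul (Z t t) (Z t t)" using C t by blast
    then show ?thesis using idem_tone[of "Z t t"] ZN[OF t t] by simp
  qed
  have Zder: "((\<lambda>r. Z t r u) has_real_derivative AA T X Y t u) (at t within {0..T})" if t: "t \<in> {0..T}" for t u
  proof -
    obtain R where R1: "\<forall>r\<in>{0..T}. Z t r = tadd (tmul (X t r) (Y t r)) (R r)"
      and R2: "\<forall>p. tpoly p \<longrightarrow> (\<lambda>r. pair (R r) p) \<in> o[at t within {0..T}](\<lambda>r. \<bar>r - t\<bar>)"
      using E t by blast
    have "(\<lambda>r. R r u) \<in> o[at t within {0..T}](\<lambda>r. \<bar>r - t\<bar>)"
      using R2[rule_format, OF tpoly_wrd[of u]] by (simp only: pair_wrd)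
    moreover have "R t u = 0"
      using R1 t Zd[OF t] sgrm_diag[OF assms(2) t] sgrm_diag[OF assms(3) t]
      by (auto simp: tadd_def fun_eq_iff)
    ultimately have dR: "((\<lambda>r. R r u) has_real_derivative 0) (at t within {0..T})"
      by (rule deriv_of_o)
    have "((\<lambda>r. tmul (X t r) (Y t r) u + R r u) has_real_derivative AA T X Y t u + 0) (at t within {0..T})"
      using DERIV_add[OF dXY[OF assms(2,3,1) t, of u] dR] by (simp add: AA_eq)
    then have "((\<lambda>r. tmul (X t r) (Y t r) u + R r u) has_real_derivative AA T X Y t u) (at t within {0..T})"
      by simp
    then show ?thesis
      by (rule has_field_derivative_transform_within[where d=1]) (use t R1 in \<open>auto simp: tadd_def\<close>)
  qed
  define W where "W r = (if r \<in> {0..T} then Z 0 r else tone)" for r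
  have ode: "odesol T X Y W"
    unfolding odesol_def
  proof (intro conjI allI ballI impI)
    show "W 0 = tone" using Zd[OF z] z by (simp add: W_def)
  next
    fix r :: real assume "r \<notin> {0..T}" then show "W r = tone" unfolding W_def by (simp only: if_not_P if_False)
  next
    fix t w assume t: "t \<in> {0..T}"
    have "((\<lambda>r. tmul (Z 0 t) (Z t r) w) has_real_derivative (tmul (\<lambda>_. 0) (Z t t) w + tmul (Z 0 t) (AA T X Y t) w)) (at t within {0..T})"
    proof (rule tmul_deriv)
      fix u
      show "((\<lambda>r. Z 0 t u) has_real_derivative 0) (at t within {0..T})" by simp
      show "((\<lambda>r. Z t r u) has_real_derivative AA T X Y t u) (at t within {0..T})" by (rule Zder[OF t])
    qed
    then have "((\<lambda>r. tmul (Z 0 t) (Z t r) w) has_real_derivative tmul (W t) (AA T X Y t) w) (at t within {0..T})"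
      using t by (simp add: W_def)
    then show "((\<lambda>r. W r w) has_real_derivative tmul (W t) (AA T X Y t) w) (at t within {0..T})"
    proof (rule has_field_derivative_transform_within[where d=1])
      fix x assume x: "x \<in> {0..T}"
      have "Z 0 x = tmul (Z 0 t) (Z t x)" using C z t x by blast
      then show "tmul (Z 0 t) (Z t x) w = W x w" using x by (simp add: W_def)
    qed (use t in auto)
  qed
  have cp: "csum_path T X Y = W" by (rule csum_path_eq[OF assms(2,3,1) ode])
  show ?thesis
  proof (intro ballI)
    fix s t assume s: "s \<in> {0..T}" and t: "t \<in> {0..T}"
    have "tinv (Z 0 s) = Z s 0"
    proof (rule tinv_eq)
      have "Z 0 0 = tmul (Z 0 s) (Z s 0)" using C z s by blast
      then show "tmul (Z 0 s) (Z s 0) = tone" using Zd[OF z] by simp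
      have "Z s s = tmul (Z s 0) (Z 0 s)" using C z s by blast
      then show "tmul (Z s 0) (Z 0 s) = tone" using Zd[OF s] by simp
    qed
    then show "Z s t = csum T X Y s t"
    proof -
      have "Z s t = tmul (Z s 0) (Z 0 t)" using C z s t by blast
      moreover have "csum T X Y s t = tmul (tinv (Z 0 s)) (Z 0 t)"
        unfolding csum_def cp W_def using s t by simp
      ultimately show ?thesis using \<open>tinv (Z 0 s) = Z s 0\<close> by simp
    qed
  qed
qed

theorem proposition2p16:
  fixes T :: real and X Y Z :: "real \<Rightarrow> real \<Rightarrow> ('d::finite) tensor"
  assumes "T > 0" and "sgrm T X" and "sgrm T Y"
    and "\<forall>s\<in>{0..T}. \<forall>t\<in>{0..T}. grouplike (Z s t)"
  shows "((\<forall>s\<in>{0..T}. \<forall>t\<in>{0..T}. Z s t = csum T X Y s t) \<longleftrightarrow>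
          ((\<forall>s\<in>{0..T}. \<forall>u\<in>{0..T}. \<forall>t\<in>{0..T}. Z s t = tmul (Z s u) (Z u t)) \<and>
           (\<forall>s\<in>{0..T}. \<exists>R :: real \<Rightarrow> 'd tensor.
              (\<forall>t\<in>{0..T}. Z s t = tadd (tmul (X s t) (Y s t)) (R t)) \<and>
              (\<forall>p. tpoly p \<longrightarrow>
                 (\<lambda>t. pair (R t) p) \<in> o[at s within {0..T}](\<lambda>t. \<bar>t - s\<bar>)))))
       \<and> (\<forall>s\<in>{0..T}. \<exists>r r' :: real \<Rightarrow> 'd tensor.
            (\<forall>t\<in>{0..T}. tmul (X s t) (Y s t) = tadd (tmul (Y s t) (X s t)) (r t) \<and>
               tmul (X s t) (Y s t) = tadd (tsub (tadd (X s t) (Y s t)) tone) (r' t)) \<and>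
            (\<forall>p. tpoly p \<longrightarrow>
               (\<lambda>t. pair (r t) p) \<in> o[at s within {0..T}](\<lambda>t. \<bar>t - s\<bar>) \<and>
               (\<lambda>t. pair (r' t) p) \<in> o[at s within {0..T}](\<lambda>t. \<bar>t - s\<bar>)))"
proof (rule conjI)
  show "(\<forall>s\<in>{0..T}. \<forall>t\<in>{0..T}. Z s t = csum T X Y s t) \<longleftrightarrow>
          ((\<forall>s\<in>{0..T}. \<forall>u\<in>{0..T}. \<forall>t\<in>{0..T}. Z s t = tmul (Z s u) (Z u t)) \<and>
           (\<forall>s\<in>{0..T}. \<exists>R :: real \<Rightarrow> 'd tensor.
              (\<forall>t\<in>{0..T}. Z s t = tadd (tmul (X s t) (Y s t)) (R t)) \<and>
              (\<forall>p. tpoly p \<longrightarrow>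
                 (\<lambda>t. pair (R t) p) \<in> o[at s within {0..T}](\<lambda>t. \<bar>t - s\<bar>))))"
    using fwd[OF assms(1-3)] bwd[OF assms(1-4)] by blast
  show "\<forall>s\<in>{0..T}. \<exists>r r' :: real \<Rightarrow> 'd tensor.
            (\<forall>t\<in>{0..T}. tmul (X s t) (Y s t) = tadd (tmul (Y s t) (X s t)) (r t) \<and>
               tmul (X s t) (Y s t) = tadd (tsub (tadd (X s t) (Y s t)) tone) (r' t)) \<and>
            (\<forall>p. tpoly p \<longrightarrow>
               (\<lambda>t. pair (r t) p) \<in> o[at s within {0..T}](\<lambda>t. \<bar>t - s\<bar>) \<and>
               (\<lambda>t. pair (r' t) p) \<in> o[at s within {0..T}](\<lambda>t. \<bar>t - s\<bar>))"
    using moreover_part[OF assms(2,3,1)] by blast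
qed

end
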